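(* Let $\mathbb{F}$ be the finite field of order $q$ and let $M_1$ and $M_2$ be orthogonal sudoku solutions of order $q^2$ generated by sudoku flags $Z_1=(g_1,V_1)$ and $Z_2=(g_2,V_2)$, respectively. If the composite solution $N_{12}$ is a sudoku solution, then it is a linear sudoku solution generated by the two-dimensional subspace $g_{12}=V_1\cap V_2$, i.e. for each symbol the set of locations of $N_{12}$ housing that symbol is a coset of $V_1\cap V_2$.
   Context: Locations of a sudoku solution of order $q^2$ are identified with vectors $(x_1,x_2,x_3,x_4)\in\mathbb{F}^4$: $x_1$ is the large row, $x_2$ the row within the large row, $x_3$ the large column, $x_4$ the column within the large column; rows, columns and subsquares are the sets of locations with fixed $(x_1,x_2)$, $(x_3,x_4)$, $(x_1,x_3)$ respectively. A sudoku solution of order $q^2$ assigns symbols $\{0,\dots,q^2-1\}$ to locations so that each symbol occurs exactly once in every row, column and subsquare; two are orthogonal if upon superimposition each ordered pair of symbols occurs exactly once. Each symbol $x=b_qq+b_1$ ($b_q,b_1\in\{0,\dots,q-1\}$) has radix digit $b_q$. The composite solution $N_{12}$ of $M_1,M_2$ assigns to each location the symbol $q\,r_1+r_2$, where $r_i$ is the radix digit of the symbol of $M_i$ at that location. A flag is a pair $(g,V)$ of subspaces of $\mathbb{F}^4$ with $\dim g=2$, $\dim V=3$, $g\subset V$; it is a sudoku flag if every coset of $g$ meets every row, column and subsquare in exactly one location. A sudoku solution $M$ generated by a sudoku flag $(g,V)$ is a sudoku solution of order $q^2$ in which each coset of $g$ is exactly the set of locations of one symbol and each coset of $V$ is exactly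 the set of locations whose symbols have one given radix digit. *)

theory Defs
  imports "HOL-Analysis.Analysis"
begin

text \<open>Locations: vectors (x1,x2,x3,x4) in F^4, modelled as 'a^4 with components
  x$1 (large row), x$2 (row within large row), x$3 (large column), x$4 (column within
  large column). Symbols are natural numbers 0..q^2-1 with q = CARD('a).\<close>

type_synonym 'a loc = "'a ^ 4"

definition row_set :: "'a \<Rightarrow> 'a \<Rightarrow> 'a loc set" where
  "row_set a b = {x. x $ 1 = a \<and> x $ 2 = b}"

definition col_set :: "'a \<Rightarrow> 'a \<Rightarrow> 'a loc set" where
  "col_set c d = {x. x $ 3 = c \<and> x $ 4 = d}"

definition subsq_set :: "'a \<Rightarrow> 'a \<Rightarrow> 'a loc set" where
  "subsq_set a c = {x. x $ 1 = a \<and> x $ 3 = c}"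

definition cells :: "'a loc set set" where
  "cells = {row_set a b | a b. True} \<union> {col_set c d | c d. True} \<union> {subsq_set a c | a c. True}"

definition coset :: "'a::field loc \<Rightarrow> 'a loc set \<Rightarrow> 'a loc set" where
  "coset a W = (\<lambda>w. a + w) ` W"

definition is_coset :: "'a loc set \<Rightarrow> 'a::field loc set \<Rightarrow> bool" where
  "is_coset S W \<longleftrightarrow> (\<exists>a. S = coset a W)"

definition sudoku_solution :: "('a::{finite,field} loc \<Rightarrow> nat) \<Rightarrow> bool" where
  "sudoku_solution M \<longleftrightarrow>
     (\<forall>x. M x < CARD('a)^2) \<and>
     (\<forall>C\<in>cells. \<forall>s < CARD('a)^2. \<exists>!x. x \<in> C \<and> M x = s)"

definition orthogonal_sudoku :: "('a::{finite,field} loc \<Rightarrow> nat) \<Rightarrow> ('a loc \<Rightarrow> nat) \<Rightarrow> bool" where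
  "orthogonal_sudoku M1 M2 \<longleftrightarrow>
     sudoku_solution M1 \<and> sudoku_solution M2 \<and>
     (\<forall>s1 < CARD('a)^2. \<forall>s2 < CARD('a)^2. \<exists>!x. M1 x = s1 \<and> M2 x = s2)"

text \<open>Radix digit b_q of symbol s = b_q q + b_1.\<close>
definition radix :: "'a::finite itself \<Rightarrow> nat \<Rightarrow> nat" where
  "radix _ s = s div CARD('a)"

definition composite :: "('a::{finite,field} loc \<Rightarrow> nat) \<Rightarrow> ('a loc \<Rightarrow> nat) \<Rightarrow> 'a loc \<Rightarrow> nat" where
  "composite M1 M2 x = CARD('a) * radix TYPE('a) (M1 x) + radix TYPE('a) (M2 x)"

definition flag :: "'a::field loc set \<Rightarrow> 'a loc set \<Rightarrow> bool" where
  "flag g V \<longleftrightarrow> vec.subspace g \<and> vec.subspace V \<and> vec.dim g = 2 \<and> vec.dim V = 3 \<and> g \<subseteq> V"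

definition sudoku_flag :: "'a::field loc set \<Rightarrow> 'a loc set \<Rightarrow> bool" where
  "sudoku_flag g V \<longleftrightarrow> flag g V \<and>
     (\<forall>a. \<forall>C\<in>cells. \<exists>!x. x \<in> coset a g \<and> x \<in> C)"

definition generated_by_flag :: "('a::{finite,field} loc \<Rightarrow> nat) \<Rightarrow> 'a loc set \<Rightarrow> 'a loc set \<Rightarrow> bool" where
  "generated_by_flag M g V \<longleftrightarrow> sudoku_flag g V \<and> sudoku_solution M \<and>
     (\<forall>a. \<exists>s. coset a g = {x. M x = s}) \<and>
     (\<forall>a. \<exists>r. coset a V = {x. radix TYPE('a) (M x) = r})"

end

theory Submission
  imports Defs
begin

lemma coset_iff: "x \<in> coset a W \<longleftrightarrow> x - a \<in> W"
  unfolding coset_def by (auto simp: image_iff) (metis add.commute diff_add_cancel)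

lemma gen_radix:
  fixes M :: "'a::{finite,field} loc \<Rightarrow> nat"
  assumes "generated_by_flag M g V"
  shows "radix TYPE('a) (M x) = radix TYPE('a) (M x0) \<longleftrightarrow> x \<in> coset x0 V"
proof -
  from assms obtain r where r: "coset x0 V = {x. radix TYPE('a) (M x) = r}"
    unfolding generated_by_flag_def by blast
  have "vec.subspace V" using assms unfolding generated_by_flag_def sudoku_flag_def flag_def by blast
  hence "x0 \<in> coset x0 V" by (simp add: coset_iff vec.subspace_0)
  with r have "r = radix TYPE('a) (M x0)" by auto
  with r show ?thesis by auto
qed

lemma radix_lt:
  assumes "sudoku_solution (M::'a::{finite,field} loc \<Rightarrow> nat)"
  shows "radix TYPE('a) (M x) < CARD('a)"
proof -
  have "M x < CARD('a) * CARD('a)" using assms unfolding sudoku_solution_def by (simp add: power2_eq_square)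
  thus ?thesis unfolding radix_def by (simp add: less_mult_imp_div_less)
qed

lemma comp_eq:
  assumes "sudoku_solution (M1::'a::{finite,field} loc \<Rightarrow> nat)" "sudoku_solution M2"
  shows "composite M1 M2 x = composite M1 M2 y \<longleftrightarrow>
     radix TYPE('a) (M1 x) = radix TYPE('a) (M1 y) \<and> radix TYPE('a) (M2 x) = radix TYPE('a) (M2 y)"
proof
  assume h: "composite M1 M2 x = composite M1 M2 y"
  have b: "radix TYPE('a) (M2 x) < CARD('a)" "radix TYPE('a) (M2 y) < CARD('a)"
    using radix_lt[OF assms(2)] by auto
  let ?q = "CARD('a)"
  have "(?q * radix TYPE('a) (M1 x) + radix TYPE('a) (M2 x)) div ?q = (?q * radix TYPE('a) (M1 y) + radix TYPE('a) (M2 y)) div ?q"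
    using h unfolding composite_def by simp
  hence 1: "radix TYPE('a) (M1 x) = radix TYPE('a) (M1 y)" using b by simp
  have "(?q * radix TYPE('a) (M1 x) + radix TYPE('a) (M2 x)) mod ?q = (?q * radix TYPE('a) (M1 y) + radix TYPE('a) (M2 y)) mod ?q"
    using h unfolding composite_def by simp
  hence "radix TYPE('a) (M2 x) = radix TYPE('a) (M2 y)" using b by simp
  with 1 show "radix TYPE('a) (M1 x) = radix TYPE('a) (M1 y) \<and> radix TYPE('a) (M2 x) = radix TYPE('a) (M2 y)" ..
qed (simp add: composite_def)

theorem proposition4p7:
  fixes M1 M2 :: "'a::{finite,field} loc \<Rightarrow> nat"
    and g1 V1 g2 V2 :: "'a loc set"
  assumes "orthogonal_sudoku M1 M2"
    and "generated_by_flag M1 g1 V1"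
    and "generated_by_flag M2 g2 V2"
    and "sudoku_solution (composite M1 M2)"
  shows "vec.subspace (V1 \<inter> V2) \<and> vec.dim (V1 \<inter> V2) = 2 \<and>
         (\<forall>s < CARD('a)^2. is_coset {x. composite M1 M2 x = s} (V1 \<inter> V2))"
proof -
  let ?N = "composite M1 M2"
  have s1: "sudoku_solution M1" and s2: "sudoku_solution M2"
    using assms(1) unfolding orthogonal_sudoku_def by auto
  have f1: "flag g1 V1" and sf1: "sudoku_flag g1 V1" using assms(2) unfolding generated_by_flag_def sudoku_flag_def by auto
  have f2: "flag g2 V2" using assms(3) unfolding generated_by_flag_def sudoku_flag_def by auto
  have sV1: "vec.subspace V1" and sV2: "vec.subspace V2" and sg1: "vec.subspace g1"
    and d1: "vec.dim V1 = 3" and d2: "vec.dim V2 = 3" and dg1: "vec.dim g1 = 2" and gV: "g1 \<subseteq> V1"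
    using f1 f2 unfolding flag_def by auto
  have sub: "vec.subspace (V1 \<inter> V2)" using sV1 sV2 by (rule vec.subspace_inter)
  have row_cell: "row_set a b \<in> cells" for a b unfolding cells_def by blast
  have ex: "\<exists>x0. ?N x0 = s" if "s < CARD('a)^2" for s
    using assms(4) that row_cell[of 0 0] unfolding sudoku_solution_def by blast
  have lev: "{x. ?N x = ?N x0} = coset x0 (V1 \<inter> V2)" for x0
  proof -
    have "?N x = ?N x0 \<longleftrightarrow> x \<in> coset x0 (V1 \<inter> V2)" for x
      using comp_eq[OF s1 s2, of x x0] gen_radix[OF assms(2), of x x0] gen_radix[OF assms(3), of x x0]
      by (simp add: coset_iff)
    thus ?thesis by auto
  qed
  have cos: "\<forall>s < CARD('a)^2. is_coset {x. ?N x = s} (V1 \<inter> V2)"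
  proof (intro allI impI)
    fix s assume "s < CARD('a)^2"
    then obtain x0 where "?N x0 = s" using ex by blast
    thus "is_coset {x. ?N x = s} (V1 \<inter> V2)" using lev[of x0] unfolding is_coset_def by auto
  qed
  have sum: "vec.dim {x + y |x y. x \<in> V1 \<and> y \<in> V2} + vec.dim (V1 \<inter> V2) = 6"
    using vec.dim_sums_Int[OF sV1 sV2] d1 d2 by simp
  have "vec.dim {x + y |x y. x \<in> V1 \<and> y \<in> V2} \<le> 4"
    using dim_subset_UNIV_cart_gen[of "{x + y |x y. x \<in> V1 \<and> y \<in> V2}"] by simp
  hence ge: "vec.dim (V1 \<inter> V2) \<ge> 2" using sum by simp
  have le: "vec.dim (V1 \<inter> V2) \<le> 3" using vec.dim_subset[of "V1 \<inter> V2" V1] d1 by simp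
  have ne3: "vec.dim (V1 \<inter> V2) \<noteq> 3"
  proof
    assume h3: "vec.dim (V1 \<inter> V2) = 3"
    have "V1 \<subseteq> vec.span (V1 \<inter> V2)" using vec.dim_eq_span[of "V1 \<inter> V2" V1] h3 d1 vec.span_superset[of V1] by simp
    hence V12: "V1 \<inter> V2 = V1" using sub vec.span_eq_iff[of "V1 \<inter> V2"] by blast
    have "g1 \<noteq> V1" using dg1 d1 by auto
    then obtain v where v: "v \<in> V1" "v \<notin> g1" using gV by blast
    have "0 < CARD('a)^2" by simp
    then obtain x0 where x0: "?N x0 = 0" using ex by blast
    let ?R = "row_set (x0$1) (x0$2)"
    have "\<exists>!x. x \<in> coset (x0 + v) g1 \<and> x \<in> ?R"
      using sf1 row_cell[of "x0$1" "x0$2"] unfolding sudoku_flag_def by blast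
    then obtain y where y: "y \<in> coset (x0 + v) g1" "y \<in> ?R" by blast
    have "y - (x0 + v) \<in> g1" using y(1) coset_iff[of y "x0 + v" g1] by blast
    hence "y - (x0 + v) \<in> V1" using gV by blast
    hence "(y - (x0 + v)) + v \<in> V1" using v(1) sV1 vec.subspace_add by blast
    hence "y - x0 \<in> V1" by (simp add: algebra_simps)
    hence yN: "?N y = 0" using lev[of x0] V12 x0 by (auto simp: coset_iff)
    have yx: "y \<noteq> x0"
    proof
      assume "y = x0"
      hence "-v \<in> g1" using \<open>y - (x0 + v) \<in> g1\<close> by simp
      hence "- (-v) \<in> g1" using sg1 vec.subspace_neg by blast
      thus False using v(2) by simp
    qed
    have "x0 \<in> ?R" unfolding row_set_def by simp
    moreover have "\<exists>!x. x \<in> ?R \<and> ?N x = 0" using assms(4) row_cell[of "x0$1" "x0$2"] \<open>0 < CARD('a)^2\<close> unfolding sudoku_solution_def by blast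
    ultimately show False using y(2) yN x0 yx by blast
  qed
  show ?thesis using sub cos ge le ne3 by auto
qed

end
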